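(* Let $M \in \mathbb{R}^{m,n}$ and $\epsilon \ge 0$. Let $\|\cdot\|$ be a column-wise matrix norm on $\mathbb{R}^{m,n}$, i.e. $\|A\| = \sum_{i=1}^n \alpha_i \|A(:,i)\|_c$ for some constants $\alpha_i > 0$ and some vector norm $\|\cdot\|_c$ on $\mathbb{R}^m$. Consider the two optimization problems \[ \text{(P1)}\quad \min_{X \in \mathbb{R}^{n,n}_+} \|X\|_{1,\infty} \ \text{ s.t. } \ \|M - MX\| \le \epsilon,\ X_{ij} \le 1 \ \forall i,j, \] \[ \text{(P2)}\quad \min_{X \in \mathbb{R}^{n,n}_+} \operatorname{trace}(X) \ \text{ s.t. } \ \|M - MX\| \le \epsilon,\ X_{ij} \le X_{ii} \le 1 \ \forall i,j. \] Then: (a) the optimal values of (P1) and (P2) coincide; (b) every optimal solution of (P2) is an optimal solution of (P1); (c) for every optimal solution $X^*$ of (P1) there exists an optimal solution $X^\dagger$ of (P2) with $\|M - MX^\dagger\| = \|M - MX^*\|$ (obtained from $X^*$ by raising diagonal entries to their row maxima and rescaling the off-diagonal entries of the corresponding columns).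
   Context: For $X \in \mathbb{R}^{n,n}$, $\|X\|_{1,\infty} := \sum_{i=1}^n \max_{1\le j\le n} |X_{ij}|$, the sum over rows of the $\ell_\infty$ norms of the rows. $\mathbb{R}^{n,n}_+$ denotes entrywise nonnegative $n\times n$ matrices. Both problems are feasible (e.g. $X = I$) and have compact feasible sets, so optimal solutions exist. *)

theory Defs
  imports "HOL-Analysis.Analysis"
begin

definition is_vector_norm :: "('v::real_vector \<Rightarrow> real) \<Rightarrow> bool" where
  "is_vector_norm N \<longleftrightarrow>
     (\<forall>x. 0 \<le> N x) \<and> (\<forall>x. N x = 0 \<longleftrightarrow> x = 0) \<and>
     (\<forall>c x. N (c *\<^sub>R x) = \<bar>c\<bar> * N x) \<and> (\<forall>x y. N (x + y) \<le> N x + N y)"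

text \<open>Column-wise matrix norm: sum_i alpha_i * N(A(:,i)). Matrices real^'n^'m are m x n.\<close>
definition colwise_norm :: "('n::finite \<Rightarrow> real) \<Rightarrow> (real^'m \<Rightarrow> real) \<Rightarrow> real^'n^'m \<Rightarrow> real" where
  "colwise_norm \<alpha> N A = (\<Sum>i\<in>UNIV. \<alpha> i * N (column i A))"

definition norm_1_inf :: "real^'n^'n::finite \<Rightarrow> real" where
  "norm_1_inf X = (\<Sum>i\<in>UNIV. Max (range (\<lambda>j. \<bar>X$i$j\<bar>)))"

definition mat_trace :: "real^'n^'n::finite \<Rightarrow> real" where
  "mat_trace X = (\<Sum>i\<in>UNIV. X$i$i)"

definition feasible_P1 :: "(real^'n^'m \<Rightarrow> real) \<Rightarrow> real^'n^'m \<Rightarrow> real \<Rightarrow> (real^'n^'n) set" where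
  "feasible_P1 nrm M \<epsilon> = {X. (\<forall>i j. 0 \<le> X$i$j) \<and> nrm (M - M ** X) \<le> \<epsilon> \<and> (\<forall>i j. X$i$j \<le> 1)}"

definition feasible_P2 :: "(real^'n^'m \<Rightarrow> real) \<Rightarrow> real^'n^'m \<Rightarrow> real \<Rightarrow> (real^'n^'n) set" where
  "feasible_P2 nrm M \<epsilon> = {X. (\<forall>i j. 0 \<le> X$i$j) \<and> nrm (M - M ** X) \<le> \<epsilon> \<and>
                              (\<forall>i j. X$i$j \<le> X$i$i \<and> X$i$i \<le> 1)}"

definition is_optimal :: "('a \<Rightarrow> real) \<Rightarrow> 'a set \<Rightarrow> 'a \<Rightarrow> bool" where
  "is_optimal f F x \<longleftrightarrow> x \<in> F \<and> (\<forall>y\<in>F. f x \<le> f y)"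

definition opt_value :: "('a \<Rightarrow> real) \<Rightarrow> 'a set \<Rightarrow> real" where
  "opt_value f F = Inf (f ` F)"

end

theory Submission
  imports Defs
begin


lemma vn_props:
  assumes "is_vector_norm N"
  shows "N 0 = 0" "\<And>x. 0 \<le> N x" "\<And>c x. N (c *\<^sub>R x) = \<bar>c\<bar> * N x" "\<And>x y. N (x+y) \<le> N x + N y"
  using assms unfolding is_vector_norm_def by auto

lemma my_column_add: "column i (A + B) = column i A + column i B"
  by (simp add: column_def vec_eq_iff)

lemma my_column_scale: "column i (c *\<^sub>R A) = c *\<^sub>R column i A"
  by (simp add: column_def vec_eq_iff)

lemma cw_add:
  assumes "is_vector_norm N" "\<forall>i. \<alpha> i > 0"
  shows "colwise_norm \<alpha> N (A + B) \<le> colwise_norm \<alpha> N A + colwise_norm \<alpha> N B"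
proof -
  have "colwise_norm \<alpha> N (A + B) = (\<Sum>i\<in>UNIV. \<alpha> i * N (column i A + column i B))"
    unfolding colwise_norm_def by (simp add: my_column_add)
  also have "\<dots> \<le> (\<Sum>i\<in>UNIV. \<alpha> i * N (column i A) + \<alpha> i * N (column i B))"
  proof (rule sum_mono)
    fix i
    have "\<alpha> i * N (column i A + column i B) \<le> \<alpha> i * (N (column i A) + N (column i B))"
      using vn_props(4)[OF assms(1)] assms(2) by (simp add: mult_left_mono less_imp_le)
    then show "\<alpha> i * N (column i A + column i B) \<le> \<alpha> i * N (column i A) + \<alpha> i * N (column i B)"
      by (simp add: distrib_left)
  qed
  also have "\<dots> = colwise_norm \<alpha> N A + colwise_norm \<alpha> N B"
    by (simp add: sum.distrib colwise_norm_def)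
  finally show ?thesis .
qed

lemma cw_scale:
  assumes "is_vector_norm N"
  shows "colwise_norm \<alpha> N (c *\<^sub>R A) = \<bar>c\<bar> * colwise_norm \<alpha> N A"
  unfolding colwise_norm_def my_column_scale vn_props(3)[OF assms]
  by (simp add: sum_distrib_left algebra_simps)

lemma my_column_zero: "column i 0 = 0"
  by (simp add: column_def vec_eq_iff)

lemma cw_zero:
  assumes "is_vector_norm N"
  shows "colwise_norm \<alpha> N 0 = 0"
  unfolding colwise_norm_def my_column_zero using vn_props(1)[OF assms] by simp

lemma mm_scale: "(M::real^'n^'m) ** (t *\<^sub>R X) = t *\<^sub>R (M ** X)"
  by (simp add: vec_eq_iff matrix_matrix_mult_def sum_distrib_left algebra_simps)

lemma resid_scale: "(M::real^'n^'m) - M ** (t *\<^sub>R X) = (1-t) *\<^sub>R M + t *\<^sub>R (M - M ** X)"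
  by (simp add: mm_scale algebra_simps)

lemma F2_rowmax:
  assumes "X \<in> feasible_P2 nrm M \<epsilon>"
  shows "Max (range (\<lambda>j. \<bar>X$i$j\<bar>)) = X$i$i"
proof (rule Max_eqI)
  show "finite (range (\<lambda>j. \<bar>X$i$j\<bar>))" by simp
  show "y \<le> X$i$i" if "y \<in> range (\<lambda>j. \<bar>X$i$j\<bar>)" for y
    using that assms unfolding feasible_P2_def by auto
  have "X$i$i = \<bar>X$i$i\<bar>" using assms unfolding feasible_P2_def by auto
  then show "X$i$i \<in> range (\<lambda>j. \<bar>X$i$j\<bar>)" by (metis rangeI)
qed

lemma F2_sub:
  assumes "X \<in> feasible_P2 nrm M \<epsilon>"
  shows "X \<in> feasible_P1 nrm M \<epsilon> \<and> norm_1_inf X = mat_trace X"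
proof
  show "X \<in> feasible_P1 nrm M \<epsilon>" using assms unfolding feasible_P1_def feasible_P2_def
    by (auto, meson order_trans)
  show "norm_1_inf X = mat_trace X" unfolding norm_1_inf_def mat_trace_def
    using F2_rowmax[OF assms] by simp
qed

lemma n1_nonneg: "0 \<le> norm_1_inf X"
proof -
  have "0 \<le> Max (range (\<lambda>j. \<bar>X$i$j\<bar>))" for i
    by (rule order_trans[OF abs_ge_zero Max_ge[of _ "\<bar>X$i$i\<bar>"]]) auto
  then show ?thesis unfolding norm_1_inf_def by (simp add: sum_nonneg)
qed

lemma construct:
  assumes Nc: "is_vector_norm Nc" and ap: "\<forall>i. \<alpha> i > 0"
    and X: "X \<in> feasible_P1 (colwise_norm \<alpha> Nc) M \<epsilon>"
  shows "\<exists>Y \<in> feasible_P2 (colwise_norm \<alpha> Nc) M \<epsilon>. mat_trace Y = norm_1_inf X \<and>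
     colwise_norm \<alpha> Nc (M - M ** Y) \<le> colwise_norm \<alpha> Nc (M - M ** X)"
proof -
  define d where "d k = Max (range (\<lambda>j. \<bar>X$k$j\<bar>))" for k
  define c where "c i = (1 - d i) / (1 - X$i$i)" for i
  define Y where "Y = (\<chi> k. \<chi> i. if k = i then d k else c i * X$k$i)"
  have nn: "0 \<le> X$k$j" and le1: "X$k$j \<le> 1" for k j using X by (auto simp: feasible_P1_def)
  have dge: "X$k$j \<le> d k" for k j
  proof -
    have "\<bar>X$k$j\<bar> \<le> d k" unfolding d_def by (rule Max_ge) auto
    then show ?thesis by simp
  qed
  have dle: "d k \<le> 1" for k
    unfolding d_def by (rule Max.boundedI) (auto simp: le1 nn)
  have cprops: "0 \<le> c i \<and> c i \<le> 1 \<and> c i * (1 - X$i$i) = 1 - d i" for i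
  proof (cases "X$i$i < 1")
    case True
    then show ?thesis using dge[of i i] dle[of i] unfolding c_def
      by (auto simp: divide_le_eq_1)
  next
    case False
    then have "X$i$i = 1" using le1[of i i] by simp
    then have "d i = 1" using dge[of i i] dle[of i] by simp
    then show ?thesis unfolding c_def by simp
  qed
  have col: "column i (M - M ** Y) = c i *\<^sub>R column i (M - M ** X)" for i
  proof -
    have "(M - M ** Y)$r$i = c i * (M - M ** X)$r$i" for r
    proof -
      have s0: "(\<Sum>k\<in>UNIV-{i}. M$r$k * Y$k$i) = c i * (\<Sum>k\<in>UNIV-{i}. M$r$k * X$k$i)"
        unfolding sum_distrib_left by (rule sum.cong) (auto simp: Y_def)
      have s1: "(\<Sum>k\<in>UNIV. M$r$k * Y$k$i) = M$r$i * d i + c i * (\<Sum>k\<in>UNIV-{i}. M$r$k * X$k$i)"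
      proof -
        have "(\<Sum>k\<in>UNIV. M$r$k * Y$k$i) = M$r$i * Y$i$i + (\<Sum>k\<in>UNIV-{i}. M$r$k * Y$k$i)"
          by (rule sum.remove) auto
        moreover have "Y$i$i = d i" by (simp add: Y_def)
        ultimately show ?thesis using s0 by simp
      qed
      have s2: "(\<Sum>k\<in>UNIV. M$r$k * X$k$i) = M$r$i * X$i$i + (\<Sum>k\<in>UNIV-{i}. M$r$k * X$k$i)"
        by (rule sum.remove) auto
      have alg: "a - (a * dd + cc * S) = cc * (a - (a * xx + S))"
        if "cc * (1 - xx) = 1 - dd" for a dd cc S xx :: real
      proof -
        have "a * (cc * (1 - xx)) = a * (1 - dd)" using that by simp
        then show ?thesis by (simp add: algebra_simps)
      qed
      have "(M - M ** Y)$r$i = M$r$i - (\<Sum>k\<in>UNIV. M$r$k * Y$k$i)"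
        by (simp add: matrix_matrix_mult_def)
      also have "\<dots> = c i * (M$r$i - (\<Sum>k\<in>UNIV. M$r$k * X$k$i))"
        unfolding s1 s2 by (rule alg) (use cprops[of i] in auto)
      also have "\<dots> = c i * (M - M ** X)$r$i"
        by (simp add: matrix_matrix_mult_def)
      finally show ?thesis .
    qed
    then show ?thesis by (simp add: column_def vec_eq_iff)
  qed
  have Yres: "colwise_norm \<alpha> Nc (M - M ** Y) \<le> colwise_norm \<alpha> Nc (M - M ** X)"
    unfolding colwise_norm_def col vn_props(3)[OF Nc]
  proof (rule sum_mono)
    fix i
    have "\<bar>c i\<bar> * Nc (column i (M - M ** X)) \<le> Nc (column i (M - M ** X))"
      using cprops[of i] vn_props(2)[OF Nc] by (simp add: mult_left_le_one_le)
    then show "\<alpha> i * (\<bar>c i\<bar> * Nc (column i (M - M ** X))) \<le> \<alpha> i * Nc (column i (M - M ** X))"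
      using ap by (simp add: mult_left_mono less_imp_le)
  qed
  have "Y \<in> feasible_P2 (colwise_norm \<alpha> Nc) M \<epsilon>"
    unfolding feasible_P2_def
  proof (intro CollectI conjI allI)
    fix i j
    show "0 \<le> Y$i$j" using cprops[of j] nn[of i j] dge[of i i] nn[of i i]
      by (auto simp: Y_def)
    show "Y$i$i \<le> 1" using dle by (simp add: Y_def)
    have "c j * X$i$j \<le> X$i$j" using cprops[of j] nn[of i j] by (simp add: mult_left_le_one_le)
    then show "Y$i$j \<le> Y$i$i" using dge[of i j] by (auto simp: Y_def)
  next
    show "colwise_norm \<alpha> Nc (M - M ** Y) \<le> \<epsilon>" using Yres X by (auto simp: feasible_P1_def)
  qed
  moreover have "mat_trace Y = norm_1_inf X"
    unfolding mat_trace_def norm_1_inf_def by (simp add: Y_def d_def)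
  ultimately show ?thesis using Yres by blast
qed


theorem theorem2:
  fixes M :: "real^'n^'m" and \<epsilon> :: real
    and \<alpha> :: "'n \<Rightarrow> real" and Nc :: "real^'m \<Rightarrow> real"
  assumes eps: "\<epsilon> \<ge> 0"
    and alpha_pos: "\<forall>i. \<alpha> i > 0"
    and Nc_norm: "is_vector_norm Nc"
  defines "nrm \<equiv> colwise_norm \<alpha> Nc"
  shows "opt_value norm_1_inf (feasible_P1 nrm M \<epsilon>) = opt_value mat_trace (feasible_P2 nrm M \<epsilon>)
         \<and> (\<forall>X. is_optimal mat_trace (feasible_P2 nrm M \<epsilon>) X
                  \<longrightarrow> is_optimal norm_1_inf (feasible_P1 nrm M \<epsilon>) X)
         \<and> (\<forall>Xs. is_optimal norm_1_inf (feasible_P1 nrm M \<epsilon>) Xs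
                  \<longrightarrow> (\<exists>Xd. is_optimal mat_trace (feasible_P2 nrm M \<epsilon>) Xd
                           \<and> nrm (M - M ** Xd) = nrm (M - M ** Xs)))"
proof -
  let ?F1 = "feasible_P1 nrm M \<epsilon>" and ?F2 = "feasible_P2 nrm M \<epsilon>"
  have nrm0: "nrm 0 = 0" unfolding nrm_def by (rule cw_zero[OF Nc_norm])
  have I2: "mat 1 \<in> ?F2"
  proof -
    have r: "nrm (M - M ** mat 1) \<le> \<epsilon>" using nrm0 eps by (simp add: matrix_mul_rid)
    have e: "(mat 1 :: real^'n^'n)$i$j = (if i = j then 1 else 0)" for i j by (simp add: mat_def)
    show ?thesis unfolding feasible_P2_def using r by (simp add: e)
  qed
  have sub: "X \<in> ?F1 \<and> norm_1_inf X = mat_trace X" if "X \<in> ?F2" for X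
    using F2_sub[OF that] .
  have con: "\<exists>Y\<in>?F2. mat_trace Y = norm_1_inf X \<and> nrm (M - M**Y) \<le> nrm (M - M**X)"
    if "X \<in> ?F1" for X
    using construct[OF Nc_norm alpha_pos that[unfolded nrm_def]] unfolding nrm_def .
  have bddA: "bdd_below (norm_1_inf ` ?F1)" by (rule bdd_belowI2[where m=0]) (rule n1_nonneg)
  have tr0: "0 \<le> mat_trace X" if "X \<in> ?F2" for X using sub[OF that] n1_nonneg[of X] by simp
  have bddB: "bdd_below (mat_trace ` ?F2)" by (rule bdd_belowI2[where m=0]) (rule tr0)
  have partA: "opt_value norm_1_inf ?F1 = opt_value mat_trace ?F2"
    unfolding opt_value_def
  proof (rule antisym)
    show "Inf (norm_1_inf ` ?F1) \<le> Inf (mat_trace ` ?F2)"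
    proof (rule cInf_superset_mono)
      show "mat_trace ` ?F2 \<noteq> {}" using I2 by blast
      show "bdd_below (norm_1_inf ` ?F1)" by (rule bddA)
      show "mat_trace ` ?F2 \<subseteq> norm_1_inf ` ?F1"
        using sub by (auto simp: image_iff) (metis)
    qed
    show "Inf (mat_trace ` ?F2) \<le> Inf (norm_1_inf ` ?F1)"
    proof (rule cInf_greatest)
      show "norm_1_inf ` ?F1 \<noteq> {}" using I2 sub by blast
      fix x assume "x \<in> norm_1_inf ` ?F1"
      then obtain X where X: "X \<in> ?F1" "x = norm_1_inf X" by blast
      from con[OF X(1)] obtain Y where "Y \<in> ?F2" "mat_trace Y = x" using X(2) by auto
      then show "Inf (mat_trace ` ?F2) \<le> x" using bddB by (metis cInf_lower imageI)
    qed
  qed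
  have partB: "is_optimal norm_1_inf ?F1 X" if "is_optimal mat_trace ?F2 X" for X
  proof -
    have X2: "X \<in> ?F2" and opt: "\<forall>Z\<in>?F2. mat_trace X \<le> mat_trace Z"
      using that unfolding is_optimal_def by auto
    show ?thesis unfolding is_optimal_def
    proof (intro conjI ballI)
      show "X \<in> ?F1" using sub[OF X2] by simp
      fix Z assume "Z \<in> ?F1"
      from con[OF this] obtain Y where "Y \<in> ?F2" "mat_trace Y = norm_1_inf Z" by auto
      then show "norm_1_inf X \<le> norm_1_inf Z" using opt sub[OF X2] by force
    qed
  qed
  have partC: "\<exists>Xd. is_optimal mat_trace ?F2 Xd \<and> nrm (M - M ** Xd) = nrm (M - M ** Xs)"
    if "is_optimal norm_1_inf ?F1 Xs" for Xs
  proof -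
    have Xs1: "Xs \<in> ?F1" and opt: "\<forall>Z\<in>?F1. norm_1_inf Xs \<le> norm_1_inf Z"
      using that unfolding is_optimal_def by auto
    from con[OF Xs1] obtain Y where Y2: "Y \<in> ?F2" and trY: "mat_trace Y = norm_1_inf Xs"
      and resY: "nrm (M - M ** Y) \<le> nrm (M - M ** Xs)" by auto
    have Yopt: "is_optimal mat_trace ?F2 Y"
      unfolding is_optimal_def using Y2 trY opt sub by fastforce
    have "nrm (M - M ** Y) = nrm (M - M ** Xs)"
    proof (rule ccontr)
      assume "nrm (M - M ** Y) \<noteq> nrm (M - M ** Xs)"
      with resY have lt: "nrm (M - M ** Y) < nrm (M - M ** Xs)" by simp
      have Xse: "nrm (M - M ** Xs) \<le> \<epsilon>" using Xs1 by (simp add: feasible_P1_def)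
      define a where "a = nrm M"
      define b where "b = nrm (M - M ** Y)"
      have blt: "b < \<epsilon>" using lt Xse b_def by simp
      obtain t where t: "0 \<le> t" "t < 1" "(1-t)*a + t*b \<le> \<epsilon>"
      proof (cases "a \<le> \<epsilon>")
        case True then show ?thesis using that[of 0] by simp
      next
        case False
        define t where "t = (a - \<epsilon>) / (a - b)"
        have ab: "a - b > 0" using False blt by simp
        have "t < 1" unfolding t_def using ab blt by (simp add: divide_less_eq_1)
        moreover have "0 \<le> t" unfolding t_def using ab False by simp
        moreover have "(1-t)*a + t*b = \<epsilon>"
        proof -
          have "t * (a - b) = a - \<epsilon>" unfolding t_def using ab by simp
          then show ?thesis by (simp add: algebra_simps)
        qed
        ultimately show ?thesis using that[of t] by simp
      qed
      have tY: "t *\<^sub>R Y \<in> ?F2"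
        unfolding feasible_P2_def
      proof (intro CollectI conjI allI)
        fix i j
        show "0 \<le> (t *\<^sub>R Y)$i$j" using Y2 t by (simp add: feasible_P2_def)
        show "(t *\<^sub>R Y)$i$j \<le> (t *\<^sub>R Y)$i$i" using Y2 t by (simp add: feasible_P2_def mult_left_mono)
        have "t * Y$i$i \<le> 1 * 1" using Y2 t by (intro mult_mono) (auto simp: feasible_P2_def)
        then show "(t *\<^sub>R Y)$i$i \<le> 1" by simp
      next
        have "nrm (M - M ** (t *\<^sub>R Y)) \<le> nrm ((1-t) *\<^sub>R M) + nrm (t *\<^sub>R (M - M ** Y))"
          unfolding resid_scale nrm_def by (rule cw_add[OF Nc_norm alpha_pos])
        also have "\<dots> = (1-t)*a + t*b"
          unfolding a_def b_def nrm_def cw_scale[OF Nc_norm] using t by simp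
        finally show "nrm (M - M ** (t *\<^sub>R Y)) \<le> \<epsilon>" using t by simp
      qed
      have "mat_trace Y \<le> mat_trace (t *\<^sub>R Y)" using Yopt tY unfolding is_optimal_def by blast
      also have "mat_trace (t *\<^sub>R Y) = t * mat_trace Y"
        unfolding mat_trace_def by (simp add: sum_distrib_left)
      finally have "mat_trace Y \<le> 0" using t tr0[OF Y2]
        by (metis mult_left_le_one_le mult_le_cancel_right1 not_less order_le_less)
      then have tr: "mat_trace Y = 0" using tr0[OF Y2] by simp
      have Yd0: "Y$i$i = 0" for i
      proof -
        have "\<forall>k\<in>UNIV. 0 \<le> Y$k$k" using Y2 by (simp add: feasible_P2_def)
        then show ?thesis using tr unfolding mat_trace_def
          by (simp add: sum_nonneg_eq_0_iff)
      qed
      have "Y = 0"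
        using Y2 Yd0 unfolding feasible_P2_def by (auto simp: vec_eq_iff intro: antisym)
      have n1: "norm_1_inf Xs = 0" using tr trY by simp
      have "Xs = 0"
      proof -
        have mx: "\<forall>i\<in>UNIV. 0 \<le> Max (range (\<lambda>j. \<bar>Xs$i$j\<bar>))"
          using n1_nonneg by (metis abs_ge_zero Max_ge finite rangeI finite_imageI order_trans)
        have "Max (range (\<lambda>j. \<bar>Xs$i$j\<bar>)) = 0" for i
          using n1 mx unfolding norm_1_inf_def by (simp add: sum_nonneg_eq_0_iff)
        then have "\<bar>Xs$i$j\<bar> \<le> 0" for i j by (metis Max_ge finite rangeI finite_imageI)
        then show ?thesis by (simp add: vec_eq_iff)
      qed
      with \<open>Y = 0\<close> lt show False by simp
    qed
    then show ?thesis using Yopt by blast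
  qed
  show ?thesis using partA partB partC by blast
qed

end
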